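(* Let $r\ge1$ be an integer, let $\Gamma$ be a finite graph without loops (edges oriented if $r$ is odd), and let $e$ be an edge of $\Gamma$ such that there is a different edge $e'$ of $\Gamma$ with the same two endpoints as $e$. Then the rings $R^r(\Gamma)$ and $R^r(\Gamma\setminus e)$ are isomorphic.
   Context: A circuit $w$ of length $k$ in a graph is an ordered sequence of edges $w_1,\dots,w_k$ with vertices $v_1,\dots,v_k,v_{k+1}=v_1$ such that $v_i,v_{i+1}$ are the endpoints of $w_i$; for $r$ odd, $\epsilon_i(w)=1$ if $w_i$ is oriented from $v_i$ to $v_{i+1}$ and $-1$ otherwise. $\Lambda^r(\Gamma)$: for $r$ even, the free graded-commutative $\mathbb{Z}$-algebra on generators $e_\beta$ of degree $r-1$, one per edge; for $r$ odd, the commutative graded $\mathbb{Z}$-algebra on such generators modulo $e_\beta^2=0$. Arnold class: $A(w)=\sum_i(-1)^i w_1\cdots\widehat{w_i}\cdots w_k$ ($r$ even), $A(w)=\sum_i\epsilon_i(w) w_1\cdots\widehat{w_i}\cdots w_k$ ($r$ odd), where $w_i$ stands for $e_{w_i}$; $A(w)=1$ for a one-edge circuit (loop). $R^r(\Gamma)=\Lambda^r(\Gamma)/I^r(\Gamma)$ where $I^r(\Gamma)$ is the ideal generated by all Arnold classes. $\Gamma\setminus e$ is $\Gamma$ with the edge $e$ deleted. *)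

theory Defs
  imports "HOL-Algebra.QuotRing" "HOL-Algebra.Ideal"
begin

text \<open>Graphs: finite vertex set V, finite edge set E, each edge x has endpoints
  src x and tgt x (for odd r this is the orientation src x to tgt x; for even r
  only the unordered pair of endpoints matters).  The linear order on edges is only
  used to fix signs in the explicit Z-basis description of the exterior algebra.\<close>

definition lam_sgn :: "nat \<Rightarrow> 'e::linorder set \<Rightarrow> 'e set \<Rightarrow> int" where
  "lam_sgn r T U = (if even r then (-1) ^ card {(t,u). t \<in> T \<and> u \<in> U \<and> u < t} else 1)"

text \<open>Elements of Lambda^r(Gamma): integer coefficient functions on squarefree monomials
  (finite sets of edges), supported on subsets of E.\<close>
definition lam_mult :: "nat \<Rightarrow> ('e::linorder set \<Rightarrow> int) \<Rightarrow> ('e set \<Rightarrow> int) \<Rightarrow> ('e set \<Rightarrow> int)" where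
  "lam_mult r f g = (\<lambda>S. \<Sum>T\<in>Pow S. lam_sgn r T (S - T) * f T * g (S - T))"

definition lam_one :: "'e set \<Rightarrow> int" where
  "lam_one = (\<lambda>S. if S = {} then 1 else 0)"

definition lam_gen :: "'e \<Rightarrow> 'e set \<Rightarrow> int" where
  "lam_gen x = (\<lambda>S. if S = {x} then 1 else 0)"

text \<open>The ring Lambda^r(Gamma): for r even the exterior algebra over Z on the edges
  (generators of odd degree r-1), for r odd the commutative algebra on the edges
  modulo e^2 = 0.\<close>
definition Lambda :: "nat \<Rightarrow> 'e::linorder set \<Rightarrow> ('e set \<Rightarrow> int) ring" where
  "Lambda r E = \<lparr>carrier = {f. \<forall>S. \<not> S \<subseteq> E \<longrightarrow> f S = 0},
                 mult = lam_mult r, one = lam_one, zero = (\<lambda>S. 0),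
                 add = (\<lambda>f g S. f S + g S)\<rparr>"

definition lam_mono :: "nat \<Rightarrow> 'e::linorder list \<Rightarrow> 'e set \<Rightarrow> int" where
  "lam_mono r ws = foldr (\<lambda>x acc. lam_mult r (lam_gen x) acc) ws lam_one"

text \<open>Circuits: edges ws = w_1..w_k, vertices vs = v_1..v_k, v_{k+1} = v_1
  (0-based indices here).\<close>
definition is_circuit :: "'e set \<Rightarrow> ('e \<Rightarrow> 'v) \<Rightarrow> ('e \<Rightarrow> 'v) \<Rightarrow> 'e list \<Rightarrow> 'v list \<Rightarrow> bool" where
  "is_circuit E src tgt ws vs \<longleftrightarrow>
     length ws \<ge> 1 \<and> length vs = length ws \<and>
     (\<forall>i < length ws. ws ! i \<in> E \<and>
        {src (ws ! i), tgt (ws ! i)} = {vs ! i, vs ! ((i + 1) mod length ws)})"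

definition circ_eps :: "('e \<Rightarrow> 'v) \<Rightarrow> ('e \<Rightarrow> 'v) \<Rightarrow> 'e list \<Rightarrow> 'v list \<Rightarrow> nat \<Rightarrow> int" where
  "circ_eps src tgt ws vs i =
     (if src (ws ! i) = vs ! i \<and> tgt (ws ! i) = vs ! ((i + 1) mod length ws) then 1 else -1)"

text \<open>Arnold class A(w); index i (0-based) corresponds to i+1 in the paper.\<close>
definition arnold :: "nat \<Rightarrow> ('e \<Rightarrow> 'v) \<Rightarrow> ('e \<Rightarrow> 'v) \<Rightarrow> 'e::linorder list \<Rightarrow> 'v list \<Rightarrow> 'e set \<Rightarrow> int" where
  "arnold r src tgt ws vs =
     (if length ws = 1 then lam_one
      else (\<lambda>S. \<Sum>i<length ws.
              (if even r then (-1) ^ (i + 1) else circ_eps src tgt ws vs i)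
              * lam_mono r (take i ws @ drop (Suc i) ws) S))"

definition arnold_ideal :: "nat \<Rightarrow> 'e::linorder set \<Rightarrow> ('e \<Rightarrow> 'v) \<Rightarrow> ('e \<Rightarrow> 'v) \<Rightarrow> ('e set \<Rightarrow> int) set" where
  "arnold_ideal r E src tgt =
     genideal (Lambda r E) {arnold r src tgt ws vs | ws vs. is_circuit E src tgt ws vs}"

definition Rring :: "nat \<Rightarrow> 'e::linorder set \<Rightarrow> ('e \<Rightarrow> 'v) \<Rightarrow> ('e \<Rightarrow> 'v) \<Rightarrow> ('e set \<Rightarrow> int) set ring" where
  "Rring r E src tgt = Lambda r E Quot arnold_ideal r E src tgt"

end

theory Submission
  imports Defs
begin

definition sgp :: "'e::linorder set \<Rightarrow> 'e set \<Rightarrow> int" where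
  "sgp A B = (\<Prod>t\<in>A. \<Prod>u\<in>B. if u < t then -1 else 1)"

definition sg :: "nat \<Rightarrow> 'e::linorder set \<Rightarrow> 'e set \<Rightarrow> int" where
  "sg r A B = (if even r then sgp A B else 1)"

lemma lam_sgn_eq:
  assumes "finite A" "finite B"
  shows "lam_sgn r A B = sg r A B"
proof -
  have "sgp A B = (\<Prod>p\<in>A\<times>B. if snd p < fst p then -1 else 1)"
    unfolding sgp_def by (simp add: prod.cartesian_product case_prod_beta)
  also have "\<dots> = (\<Prod>p\<in>(A\<times>B) \<inter> {p. snd p < fst p}. -1) * (\<Prod>p\<in>(A\<times>B) \<inter> - {p. snd p < fst p}. 1)"
    using assms by (subst prod.If_cases) auto
  also have "\<dots> = (-1) ^ card ((A\<times>B) \<inter> {p. snd p < fst p})" by simp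
  also have "(A\<times>B) \<inter> {p. snd p < fst p} = {(t,u). t \<in> A \<and> u \<in> B \<and> u < t}" by auto
  finally show ?thesis unfolding lam_sgn_def sg_def by simp
qed

lemma sgp_empty[simp]: "sgp {} B = 1" "sgp A {} = 1"
  unfolding sgp_def by auto

lemma sg_empty[simp]: "sg r {} B = 1" "sg r A {} = 1"
  unfolding sg_def by auto

lemma sgp_Un1: "finite A \<Longrightarrow> finite B \<Longrightarrow> A \<inter> B = {} \<Longrightarrow> sgp (A \<union> B) C = sgp A C * sgp B C"
  unfolding sgp_def by (simp add: prod.union_disjoint)

lemma sgp_Un2: "finite B \<Longrightarrow> finite C \<Longrightarrow> B \<inter> C = {} \<Longrightarrow> sgp A (B \<union> C) = sgp A B * sgp A C"
  unfolding sgp_def by (simp add: prod.union_disjoint prod.distrib)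

lemma sg_Un1: "finite A \<Longrightarrow> finite B \<Longrightarrow> A \<inter> B = {} \<Longrightarrow> sg r (A \<union> B) C = sg r A C * sg r B C"
  unfolding sg_def by (simp add: sgp_Un1)

lemma sg_Un2: "finite B \<Longrightarrow> finite C \<Longrightarrow> B \<inter> C = {} \<Longrightarrow> sg r A (B \<union> C) = sg r A B * sg r A C"
  unfolding sg_def by (simp add: sgp_Un2)

lemma sgp_sq: "sgp A B * sgp A B = 1"
proof -
  have "sgp A B * sgp A B = (\<Prod>t\<in>A. (\<Prod>u\<in>B. if u < t then -1 else 1) * (\<Prod>u\<in>B. if u < t then -1 else (1::int)))"
    unfolding sgp_def by (simp add: prod.distrib)
  also have "\<dots> = (\<Prod>t\<in>A. (\<Prod>u\<in>B. (if u < t then -1 else 1) * (if u < t then -1 else (1::int))))"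
    by (simp add: prod.distrib)
  also have "\<dots> = 1" by (intro prod.neutral ballI) auto
  finally show ?thesis .
qed

lemma sg_sq[simp]: "sg r A B * sg r A B = 1"
  unfolding sg_def using sgp_sq by auto

lemma sg_swap1:
  assumes "finite A" "x \<notin> A"
  shows "sg r A {x} = sg r {x} A * (if even r then (-1) ^ card A else 1)"
proof (cases "even r")
  case True
  have "sgp A {x} * sgp {x} A = (\<Prod>t\<in>A. (if x < t then -1 else 1) * (if t < x then -1 else (1::int)))"
    unfolding sgp_def by (simp add: prod.distrib)
  also have "\<dots> = (\<Prod>t\<in>A. -1)"
    using assms by (intro prod.cong) auto
  also have "\<dots> = (-1) ^ card A" by simp
  finally have "sgp A {x} * sgp {x} A = (-1) ^ card A" .
  hence "sgp A {x} * sgp {x} A * sgp {x} A = (-1) ^ card A * sgp {x} A" by simp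
  hence "sgp A {x} = (-1) ^ card A * sgp {x} A" using sgp_sq[of "{x}" A]
    by (simp add: mult.assoc)
  then show ?thesis using True unfolding sg_def by simp
qed (simp add: sg_def)

lemma lam_mult_eq:
  "lam_mult r f g S = (if finite S then (\<Sum>T\<in>Pow S. sg r T (S - T) * f T * g (S - T)) else 0)"
proof (cases "finite S")
  case True
  then show ?thesis unfolding lam_mult_def
    by (auto intro!: sum.cong simp: lam_sgn_eq finite_subset)
next
  case False
  then show ?thesis unfolding lam_mult_def by simp
qed

lemma lam_mult_inf: "infinite S \<Longrightarrow> lam_mult r f g S = 0"
  by (simp add: lam_mult_eq)

lemma lam_mult_fin: "finite S \<Longrightarrow> lam_mult r f g S = (\<Sum>T\<in>Pow S. sg r T (S - T) * f T * g (S - T))"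
  by (simp add: lam_mult_eq)

lemma sign_assoc:
  assumes "finite S" "A \<subseteq> S" "B \<subseteq> S - A"
  shows "sg r (A \<union> B) (S - (A \<union> B)) * sg r A B = sg r A (S - A) * sg r B (S - A - B)"
proof -
  have "B \<subseteq> S" using assms by auto
  then have fin: "finite A" "finite B" "finite (S - A - B)" using assms finite_subset by auto
  have d: "A \<inter> B = {}" using assms by auto
  have e1: "S - (A \<union> B) = S - A - B" by auto
  have e2: "S - A = B \<union> (S - A - B)" using assms by auto
  have "sg r (A \<union> B) (S - (A \<union> B)) = sg r A (S - A - B) * sg r B (S - A - B)"
    using sg_Un1[OF fin(1,2) d] e1 by simp
  moreover have "sg r A (S - A) = sg r A B * sg r A (S - A - B)"
    using e2 sg_Un2[OF fin(2,3), where A=A and r=r] by auto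
  ultimately show ?thesis by simp
qed

lemma lam_mult_assoc: "lam_mult r (lam_mult r f g) h = lam_mult r f (lam_mult r g h)"
proof (rule ext)
  fix S :: "'a set"
  show "lam_mult r (lam_mult r f g) h S = lam_mult r f (lam_mult r g h) S"
  proof (cases "finite S")
    case False then show ?thesis by (simp add: lam_mult_inf)
  next
    case True
    let ?F = "\<lambda>A T. sg r T (S - T) * sg r A (T - A) * f A * g (T - A) * h (S - T)"
    have "lam_mult r (lam_mult r f g) h S = (\<Sum>T\<in>Pow S. \<Sum>A\<in>{A\<in>Pow S. A \<subseteq> T}. ?F A T)"
    proof (simp add: lam_mult_fin True, intro sum.cong refl)
      fix T assume T: "T \<in> Pow S"
      have fT: "finite T" using T True finite_subset by auto
      have pw: "{A\<in>Pow S. A \<subseteq> T} = Pow T" using T by auto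
      show "sg r T (S - T) * lam_mult r f g T * h (S - T) = (\<Sum>A | A \<subseteq> S \<and> A \<subseteq> T. ?F A T)"
        using pw fT by (simp add: lam_mult_fin sum_distrib_left sum_distrib_right Pow_def mult_ac)
    qed
    also have "\<dots> = (\<Sum>A\<in>Pow S. \<Sum>T\<in>{T\<in>Pow S. A \<subseteq> T}. ?F A T)"
      using True by (intro sum.swap_restrict) auto
    also have "\<dots> = (\<Sum>A\<in>Pow S. \<Sum>B\<in>Pow (S - A). ?F A (A \<union> B))"
    proof (rule sum.cong[OF refl])
      fix A assume A: "A \<in> Pow S"
      have "bij_betw (\<lambda>B. A \<union> B) (Pow (S - A)) {T\<in>Pow S. A \<subseteq> T}"
        by (rule bij_betw_byWitness[where f' = "\<lambda>T. T - A"]) (use A in auto)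
      from sum.reindex_bij_betw[OF this, of "?F A"]
      show "(\<Sum>T\<in>{T\<in>Pow S. A \<subseteq> T}. ?F A T) = (\<Sum>B\<in>Pow (S - A). ?F A (A \<union> B))"
        by simp
    qed
    also have "\<dots> = (\<Sum>A\<in>Pow S. \<Sum>B\<in>Pow (S - A). sg r A (S - A) * sg r B (S - A - B) * f A * g B * h (S - A - B))"
    proof (intro sum.cong refl)
      fix A B assume A: "A \<in> Pow S" and B: "B \<in> Pow (S - A)"
      have e1: "A \<union> B - A = B" "S - (A \<union> B) = S - A - B" using B by auto
      show "?F A (A \<union> B) = sg r A (S - A) * sg r B (S - A - B) * f A * g B * h (S - A - B)"
        using sign_assoc[OF True, of A B r] A B unfolding e1 by (simp add: mult_ac)
    qed
    also have "\<dots> = lam_mult r f (lam_mult r g h) S"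
      unfolding lam_mult_fin[OF True, of r f]
    proof (rule sum.cong[OF refl])
      fix A assume A: "A \<in> Pow S"
      have "finite (S - A)" using True by auto
      then show "(\<Sum>B\<in>Pow (S - A). sg r A (S - A) * sg r B (S - A - B) * f A * g B * h (S - A - B)) =
        sg r A (S - A) * f A * lam_mult r g h (S - A)"
        by (simp add: lam_mult_fin sum_distrib_left mult_ac)
    qed
    finally show ?thesis .
  qed
qed

lemma lam_mult_distl: "lam_mult r f (\<lambda>S. g S + h S) = (\<lambda>S. lam_mult r f g S + lam_mult r f h S)"
  by (rule ext) (simp add: lam_mult_eq sum.distrib algebra_simps)

lemma lam_mult_distr: "lam_mult r (\<lambda>S. g S + h S) f = (\<lambda>S. lam_mult r g f S + lam_mult r h f S)"
  by (rule ext) (simp add: lam_mult_eq sum.distrib algebra_simps)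

lemma lam_mult_one_l: "lam_mult r lam_one f S = (if finite S then f S else 0)"
proof (cases "finite S")
  case True
  have "(\<Sum>T\<in>Pow S. sg r T (S - T) * lam_one T * f (S - T)) = (\<Sum>T\<in>{{}}. sg r T (S - T) * lam_one T * f (S - T))"
    using True by (intro sum.mono_neutral_right) (auto simp: lam_one_def)
  then show ?thesis using True by (simp add: lam_mult_fin lam_one_def)
qed (simp add: lam_mult_inf)

lemma lam_mult_one_r: "lam_mult r f lam_one S = (if finite S then f S else 0)"
proof (cases "finite S")
  case True
  have "(\<Sum>T\<in>Pow S. sg r T (S - T) * f T * lam_one (S - T)) = (\<Sum>T\<in>{S}. sg r T (S - T) * f T * lam_one (S - T))"
    using True by (intro sum.mono_neutral_right) (auto simp: lam_one_def)
  then show ?thesis using True by (simp add: lam_mult_fin lam_one_def)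
qed (simp add: lam_mult_inf)

lemma carrier_Lambda: "carrier (Lambda r E) = {f. \<forall>S. \<not> S \<subseteq> E \<longrightarrow> f S = 0}"
  and mult_Lambda: "mult (Lambda r E) = lam_mult r"
  and one_Lambda: "one (Lambda r E) = lam_one"
  and zero_Lambda: "zero (Lambda r E) = (\<lambda>S. 0)"
  and add_Lambda: "add (Lambda r E) = (\<lambda>f g S. f S + g S)"
  by (simp_all add: Lambda_def)

lemma carr_inf: "finite E \<Longrightarrow> f \<in> carrier (Lambda r E) \<Longrightarrow> infinite S \<Longrightarrow> f S = 0"
  unfolding carrier_Lambda using finite_subset by blast

lemma lam_mult_closed: assumes "f \<in> carrier (Lambda r E)" "g \<in> carrier (Lambda r E)" shows "lam_mult r f g \<in> carrier (Lambda r E)"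
  unfolding carrier_Lambda mem_Collect_eq
proof (intro allI impI)
  have f: "\<forall>S. \<not> S \<subseteq> E \<longrightarrow> f S = 0" and g: "\<forall>S. \<not> S \<subseteq> E \<longrightarrow> g S = 0" using assms unfolding carrier_Lambda by auto
  fix S assume S: "\<not> S \<subseteq> E"
  show "lam_mult r f g S = 0"
  proof (cases "finite S")
    case True
    have "f T * g (S - T) = 0" if "T \<subseteq> S" for T
    proof (cases "T \<subseteq> E")
      case True then have "\<not> S - T \<subseteq> E" using S that by blast
      then show ?thesis using g by simp
    next
      case False then show ?thesis using f by simp
    qed
    then show ?thesis using True by (auto simp: lam_mult_fin mult.assoc intro!: sum.neutral)
  qed (simp add: lam_mult_inf)
qed

lemma ring_Lambda: fixes E :: "'e::linorder set" assumes "finite E" shows "ring (Lambda r E)"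
proof (rule ringI)
  show "abelian_group (Lambda r E)"
  proof (rule abelian_groupI, simp_all add: carrier_Lambda add_Lambda zero_Lambda)
    fix x :: "'e set \<Rightarrow> int" assume x: "\<forall>S. \<not> S \<subseteq> E \<longrightarrow> x S = 0"
    show "\<exists>y. (\<forall>S. \<not> S \<subseteq> E \<longrightarrow> y S = 0) \<and> (\<lambda>S. y S + x S) = (\<lambda>S. 0)"
      by (rule exI[of _ "\<lambda>S. - x S"]) (use x in auto)
  qed (auto simp: fun_eq_iff)
  show "monoid (Lambda r E)"
  proof (rule monoidI, simp_all add: mult_Lambda one_Lambda lam_mult_closed[unfolded mult_Lambda] lam_mult_assoc)
    show "lam_one \<in> carrier (Lambda r E)" unfolding carrier_Lambda lam_one_def by auto
    fix x assume x: "x \<in> carrier (Lambda r E)"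
    show "lam_mult r lam_one x = x" "lam_mult r x lam_one = x"
      using carr_inf[OF assms x] by (auto simp: fun_eq_iff lam_mult_one_l lam_mult_one_r)
  qed
qed (simp_all add: mult_Lambda add_Lambda lam_mult_distl lam_mult_distr)

definition alp :: "nat \<Rightarrow> ('e set \<Rightarrow> int) \<Rightarrow> ('e set \<Rightarrow> int)" where
  "alp r f = (\<lambda>S. (if even r then (-1) ^ card S else 1) * f S)"

definition smul :: "int \<Rightarrow> ('e set \<Rightarrow> int) \<Rightarrow> ('e set \<Rightarrow> int)" where
  "smul k f = (\<lambda>S. k * f S)"

definition dA :: "'e \<Rightarrow> ('e set \<Rightarrow> int) \<Rightarrow> ('e set \<Rightarrow> int)" where
  "dA e f = (\<lambda>S. if e \<in> S then 0 else f S)"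

definition dB :: "nat \<Rightarrow> 'e::linorder \<Rightarrow> ('e set \<Rightarrow> int) \<Rightarrow> ('e set \<Rightarrow> int)" where
  "dB r e f = (\<lambda>S. if e \<in> S then 0 else sg r {e} S * f (insert e S))"

lemma lam_mult_gen_l:
  "lam_mult r (lam_gen x) b S = (if finite S \<and> x \<in> S then sg r {x} (S - {x}) * b (S - {x}) else 0)"
proof (cases "finite S")
  case True
  show ?thesis
  proof (cases "x \<in> S")
    case xS: True
    have "(\<Sum>T\<in>Pow S. sg r T (S - T) * lam_gen x T * b (S - T)) = (\<Sum>T\<in>{{x}}. sg r T (S - T) * lam_gen x T * b (S - T))"
      using True xS by (intro sum.mono_neutral_right) (auto simp: lam_gen_def)
    then show ?thesis using True xS by (simp add: lam_mult_fin lam_gen_def)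
  next
    case False
    then show ?thesis using True by (auto simp: lam_mult_fin lam_gen_def intro!: sum.neutral)
  qed
qed (simp add: lam_mult_inf)

lemma lam_mult_gen_r:
  "lam_mult r f (lam_gen x) S = (if finite S \<and> x \<in> S then sg r (S - {x}) {x} * f (S - {x}) else 0)"
proof (cases "finite S")
  case True
  show ?thesis
  proof (cases "x \<in> S")
    case xS: True
    have e: "S - (S - {x}) = {x}" using xS by auto
    have "(\<Sum>T\<in>Pow S. sg r T (S - T) * f T * lam_gen x (S - T)) = (\<Sum>T\<in>{S - {x}}. sg r T (S - T) * f T * lam_gen x (S - T))"
      using True xS by (intro sum.mono_neutral_right) (auto simp: lam_gen_def)
    then show ?thesis using True xS e by (simp add: lam_mult_fin lam_gen_def)
  next
    case False
    have "\<And>T. T \<subseteq> S \<Longrightarrow> S - T \<noteq> {x}" using False by auto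
    then show ?thesis using True False by (auto simp: lam_mult_fin lam_gen_def intro!: sum.neutral)
  qed
qed (simp add: lam_mult_inf)

lemma gen_commute: "lam_mult r f (lam_gen x) = lam_mult r (lam_gen x) (alp r f)"
proof (rule ext)
  fix S
  show "lam_mult r f (lam_gen x) S = lam_mult r (lam_gen x) (alp r f) S"
  proof (cases "finite S \<and> x \<in> S")
    case True
    have "finite (S - {x})" "x \<notin> S - {x}" using True by auto
    from sg_swap1[OF this, of r] show ?thesis using True
      by (simp add: lam_mult_gen_l lam_mult_gen_r alp_def)
  next
    case False then show ?thesis unfolding lam_mult_gen_l lam_mult_gen_r if_not_P[OF False] by simp
  qed
qed

lemma gen_sq: "lam_mult r (lam_gen x) (lam_gen x) = (\<lambda>S. 0)"
  by (rule ext) (subst lam_mult_gen_l, auto simp: lam_gen_def)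

lemma alp_mult: "alp r (lam_mult r f g) = lam_mult r (alp r f) (alp r g)"
proof (rule ext)
  fix S :: "'a set"
  show "alp r (lam_mult r f g) S = lam_mult r (alp r f) (alp r g) S"
  proof (cases "finite S")
    case True
    have "\<And>T. T \<subseteq> S \<Longrightarrow> card S = card T + card (S - T)"
      using True by (metis card_Diff_subset card_mono finite_subset le_add_diff_inverse)
    then have "\<And>T. T \<subseteq> S \<Longrightarrow> ((-1::int) ^ card S) = (-1) ^ card T * (-1) ^ card (S - T)"
      by (metis power_add)
    then show ?thesis using True
      by (auto simp: alp_def lam_mult_fin sum_distrib_left mult_ac intro!: sum.cong)
  qed (simp add: lam_mult_inf alp_def)
qed

lemma smul_mult_l: "lam_mult r (smul k f) g = smul k (lam_mult r f g)"
  by (rule ext) (simp add: lam_mult_eq smul_def sum_distrib_left mult_ac)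

lemma smul_mult_r: "lam_mult r f (smul k g) = smul k (lam_mult r f g)"
  by (rule ext) (simp add: lam_mult_eq smul_def sum_distrib_left mult_ac)

lemma lam_mult_zero_r: "lam_mult r f (\<lambda>S. 0) = (\<lambda>S. 0)"
  by (rule ext) (simp add: lam_mult_eq)

lemma (in ring) twist_mult:
  assumes x: "x \<in> carrier R" and xx: "x \<otimes> x = \<zero>"
    and al: "\<And>y. y \<in> carrier R \<Longrightarrow> al y \<in> carrier R"
    and com: "\<And>y. y \<in> carrier R \<Longrightarrow> y \<otimes> x = x \<otimes> al y"
    and c: "a \<in> carrier R" "b \<in> carrier R" "a' \<in> carrier R" "b' \<in> carrier R"
  shows "(a \<oplus> x \<otimes> b) \<otimes> (a' \<oplus> x \<otimes> b') = a \<otimes> a' \<oplus> x \<otimes> (al a \<otimes> b' \<oplus> b \<otimes> a')"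
proof -
  have 1: "a \<otimes> (x \<otimes> b') = x \<otimes> (al a \<otimes> b')"
    using x c al com by (metis m_assoc)
  have 2: "(x \<otimes> b) \<otimes> a' = x \<otimes> (b \<otimes> a')" using x c by (simp add: m_assoc)
  have "(x \<otimes> b) \<otimes> (x \<otimes> b') = x \<otimes> ((b \<otimes> x) \<otimes> b')" using x c by (simp add: m_assoc)
  also have "\<dots> = x \<otimes> ((x \<otimes> al b) \<otimes> b')" using com c by simp
  also have "\<dots> = (x \<otimes> x) \<otimes> (al b \<otimes> b')" using x c al by (simp add: m_assoc)
  also have "\<dots> = \<zero>" using xx c al by simp
  finally have 3: "(x \<otimes> b) \<otimes> (x \<otimes> b') = \<zero>" .
  have "(a \<oplus> x \<otimes> b) \<otimes> (a' \<oplus> x \<otimes> b') = (a \<otimes> a' \<oplus> a \<otimes> (x \<otimes> b')) \<oplus> ((x \<otimes> b) \<otimes> a' \<oplus> (x \<otimes> b) \<otimes> (x \<otimes> b'))"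
    using x c by (simp add: l_distr r_distr a_ac)
  also have "\<dots> = a \<otimes> a' \<oplus> (x \<otimes> (al a \<otimes> b') \<oplus> x \<otimes> (b \<otimes> a'))"
    unfolding 1 2 3 using x c al by (simp add: a_assoc)
  also have "\<dots> = a \<otimes> a' \<oplus> x \<otimes> (al a \<otimes> b' \<oplus> b \<otimes> a')"
    using x c al by (simp add: r_distr)
  finally show ?thesis .
qed

definition phi :: "nat \<Rightarrow> 'e::linorder \<Rightarrow> 'e \<Rightarrow> int \<Rightarrow> ('e set \<Rightarrow> int) \<Rightarrow> ('e set \<Rightarrow> int)" where
  "phi r e e' c f = (\<lambda>S. dA e f S + lam_mult r (smul c (lam_gen e')) (dB r e f) S)"

lemma dA_add: "dA e (\<lambda>S. f S + h S) = (\<lambda>S. dA e f S + dA e h S)"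
  by (rule ext) (simp add: dA_def)
lemma dB_add: "dB r e (\<lambda>S. f S + h S) = (\<lambda>S. dB r e f S + dB r e h S)"
  by (rule ext) (simp add: dB_def algebra_simps)

lemma phi_add: "phi r e e' c (\<lambda>S. f S + h S) = (\<lambda>S. phi r e e' c f S + phi r e e' c h S)"
  unfolding phi_def dA_add dB_add lam_mult_distl by (rule ext) simp

lemma carrier_mono: "E0 \<subseteq> E \<Longrightarrow> carrier (Lambda r E0) \<subseteq> carrier (Lambda r E)"
  unfolding carrier_Lambda by blast

lemma gen_carrier: "x \<in> E \<Longrightarrow> lam_gen x \<in> carrier (Lambda r E)"
  unfolding carrier_Lambda lam_gen_def by auto
lemma smul_carrier: "f \<in> carrier (Lambda r E) \<Longrightarrow> smul k f \<in> carrier (Lambda r E)"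
  unfolding carrier_Lambda smul_def by auto
lemma alp_carrier: "f \<in> carrier (Lambda r E) \<Longrightarrow> alp r f \<in> carrier (Lambda r E)"
  unfolding carrier_Lambda alp_def by auto
lemma add_carrier: "f \<in> carrier (Lambda r E) \<Longrightarrow> g \<in> carrier (Lambda r E) \<Longrightarrow> (\<lambda>S. f S + g S) \<in> carrier (Lambda r E)"
  unfolding carrier_Lambda by auto
lemma one_carrier: "lam_one \<in> carrier (Lambda r E)"
  unfolding carrier_Lambda lam_one_def by auto
lemma dA_carrier: "f \<in> carrier (Lambda r E) \<Longrightarrow> dA e f \<in> carrier (Lambda r (E - {e}))"
  unfolding carrier_Lambda dA_def by auto
lemma dB_carrier: assumes "f \<in> carrier (Lambda r E)" shows "dB r e f \<in> carrier (Lambda r (E - {e}))"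
  unfolding carrier_Lambda mem_Collect_eq
proof (intro allI impI)
  fix S assume S: "\<not> S \<subseteq> E - {e}"
  show "dB r e f S = 0"
  proof (cases "e \<in> S")
    case False
    then have "\<not> insert e S \<subseteq> E" using S by auto
    then show ?thesis using assms False unfolding carrier_Lambda dB_def by auto
  qed (simp add: dB_def)
qed

lemma decomp:
  assumes "finite E" "f \<in> carrier (Lambda r E)"
  shows "f = (\<lambda>S. dA e f S + lam_mult r (lam_gen e) (dB r e f) S)"
proof (rule ext)
  fix S
  show "f S = dA e f S + lam_mult r (lam_gen e) (dB r e f) S"
  proof (cases "finite S")
    case False
    then show ?thesis using carr_inf[OF assms] by (simp add: lam_mult_inf dA_def)
  next
    case True
    show ?thesis
    proof (cases "e \<in> S")
      case eS: True
      have "insert e (S - {e}) = S" using eS by auto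
      then show ?thesis using True eS sg_sq[of r "{e}" "S - {e}"]
        by (simp add: lam_mult_gen_l dA_def dB_def mult.assoc[symmetric])
    qed (simp add: lam_mult_gen_l dA_def)
  qed
qed

lemma recover:
  assumes "finite E" "a \<in> carrier (Lambda r (E - {e}))" "b \<in> carrier (Lambda r (E - {e}))"
  shows "dA e (\<lambda>S. a S + lam_mult r (lam_gen e) b S) = a"
    "dB r e (\<lambda>S. a S + lam_mult r (lam_gen e) b S) = b"
proof -
  have a0: "e \<in> S \<Longrightarrow> a S = 0" for S using assms(2) unfolding carrier_Lambda by auto
  have b0: "e \<in> S \<Longrightarrow> b S = 0" for S using assms(3) unfolding carrier_Lambda by auto
  have binf: "infinite S \<Longrightarrow> b S = 0" for S using carr_inf[OF _ assms(3)] assms(1) by auto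
  show "dA e (\<lambda>S. a S + lam_mult r (lam_gen e) b S) = a"
    by (rule ext) (auto simp: dA_def lam_mult_gen_l a0)
  show "dB r e (\<lambda>S. a S + lam_mult r (lam_gen e) b S) = b"
  proof (rule ext)
    fix S
    show "dB r e (\<lambda>S. a S + lam_mult r (lam_gen e) b S) S = b S"
    proof (cases "e \<in> S")
      case False
      have "insert e S - {e} = S" using False by auto
      then show ?thesis using False a0[of "insert e S"] binf[of S] sg_sq[of r "{e}" S]
        by (cases "finite S") (auto simp: dB_def lam_mult_gen_l mult.assoc[symmetric])
    qed (simp add: dB_def b0)
  qed
qed

context
  fixes r :: nat and E :: "'e::linorder set" and e e' :: 'e and c :: int
  assumes finE: "finite E" and eE: "e \<in> E" and e'E: "e' \<in> E" and ne: "e' \<noteq> e"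
    and csq: "c * c = 1"
begin

lemma finE0: "finite (E - {e})" using finE by simp

lemma ringR: "ring (Lambda r E)" using ring_Lambda[OF finE] .
lemma ringR0: "ring (Lambda r (E - {e}))" using ring_Lambda[OF finE0] .

lemma sub0: "carrier (Lambda r (E - {e})) \<subseteq> carrier (Lambda r E)" by (rule carrier_mono) auto

lemma xp_carrier: "smul c (lam_gen e') \<in> carrier (Lambda r (E - {e}))"
  using ne e'E by (intro smul_carrier gen_carrier) auto

lemma xp_sq: "lam_mult r (smul c (lam_gen e')) (smul c (lam_gen e')) = (\<lambda>S. 0)"
  unfolding smul_mult_l smul_mult_r gen_sq by (simp add: smul_def)

lemma xp_com: "lam_mult r y (smul c (lam_gen e')) = lam_mult r (smul c (lam_gen e')) (alp r y)"
  by (simp add: smul_mult_l smul_mult_r gen_commute[of r y])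

lemma phi_recover:
  assumes "a \<in> carrier (Lambda r (E - {e}))" "b \<in> carrier (Lambda r (E - {e}))"
  shows "phi r e e' c (\<lambda>S. a S + lam_mult r (lam_gen e) b S) = (\<lambda>S. a S + lam_mult r (smul c (lam_gen e')) b S)"
  unfolding phi_def recover[OF finE assms] ..

lemma phi_carrier: "f \<in> carrier (Lambda r E) \<Longrightarrow> phi r e e' c f \<in> carrier (Lambda r (E - {e}))"
  unfolding phi_def
  by (intro add_carrier dA_carrier lam_mult_closed xp_carrier dB_carrier)

lemma twistR:
  assumes "x \<in> carrier (Lambda r E)" "lam_mult r x x = (\<lambda>S. 0)"
    "\<And>y. lam_mult r y x = lam_mult r x (alp r y)"
    "a \<in> carrier (Lambda r E)" "b \<in> carrier (Lambda r E)" "a' \<in> carrier (Lambda r E)" "b' \<in> carrier (Lambda r E)"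
  shows "lam_mult r (\<lambda>S. a S + lam_mult r x b S) (\<lambda>S. a' S + lam_mult r x b' S)
     = (\<lambda>S. lam_mult r a a' S + lam_mult r x (\<lambda>S. lam_mult r (alp r a) b' S + lam_mult r b a' S) S)"
proof -
  have xx: "x \<otimes>\<^bsub>Lambda r E\<^esub> x = \<zero>\<^bsub>Lambda r E\<^esub>" using assms(2) by (simp add: mult_Lambda zero_Lambda)
  have com: "\<And>y. y \<in> carrier (Lambda r E) \<Longrightarrow> y \<otimes>\<^bsub>Lambda r E\<^esub> x = x \<otimes>\<^bsub>Lambda r E\<^esub> alp r y"
    using assms(3) by (simp add: mult_Lambda)
  have "(\<And>y. y \<in> carrier (Lambda r E) \<Longrightarrow> alp r y \<in> carrier (Lambda r E))" by (rule alp_carrier)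
  from ring.twist_mult[OF ringR assms(1) xx this com assms(4-7)]
  show ?thesis by (simp add: add_Lambda mult_Lambda)
qed

lemma phi_mult:
  assumes f: "f \<in> carrier (Lambda r E)" and h: "h \<in> carrier (Lambda r E)"
  shows "phi r e e' c (lam_mult r f h) = lam_mult r (phi r e e' c f) (phi r e e' c h)"
proof -
  let ?a = "dA e f" and ?b = "dB r e f" and ?a' = "dA e h" and ?b' = "dB r e h"
  let ?g = "lam_gen e" and ?x = "smul c (lam_gen e')"
  have c0: "?a \<in> carrier (Lambda r (E - {e}))" "?b \<in> carrier (Lambda r (E - {e}))"
     "?a' \<in> carrier (Lambda r (E - {e}))" "?b' \<in> carrier (Lambda r (E - {e}))"
    using f h by (auto intro: dA_carrier dB_carrier)
  then have c1: "?a \<in> carrier (Lambda r E)" "?b \<in> carrier (Lambda r E)"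
     "?a' \<in> carrier (Lambda r E)" "?b' \<in> carrier (Lambda r E)" using sub0 by auto
  have gc: "?g \<in> carrier (Lambda r E)" using eE by (rule gen_carrier)
  have xc: "?x \<in> carrier (Lambda r E)" using xp_carrier sub0 by auto
  have "lam_mult r f h = lam_mult r (\<lambda>S. ?a S + lam_mult r ?g ?b S) (\<lambda>S. ?a' S + lam_mult r ?g ?b' S)"
    using decomp[OF finE f, of e] decomp[OF finE h, of e] by simp
  also have "\<dots> = (\<lambda>S. lam_mult r ?a ?a' S + lam_mult r ?g (\<lambda>S. lam_mult r (alp r ?a) ?b' S + lam_mult r ?b ?a' S) S)"
    by (rule twistR[OF gc gen_sq gen_commute c1])
  finally have 1: "lam_mult r f h = \<dots>" .
  have 2: "lam_mult r ?a ?a' \<in> carrier (Lambda r (E - {e}))"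
    "(\<lambda>S. lam_mult r (alp r ?a) ?b' S + lam_mult r ?b ?a' S) \<in> carrier (Lambda r (E - {e}))"
    using c0 by (auto intro!: lam_mult_closed add_carrier alp_carrier)
  have "phi r e e' c (lam_mult r f h) = (\<lambda>S. lam_mult r ?a ?a' S + lam_mult r ?x (\<lambda>S. lam_mult r (alp r ?a) ?b' S + lam_mult r ?b ?a' S) S)"
    unfolding 1 by (rule phi_recover[OF 2])
  also have "\<dots> = lam_mult r (\<lambda>S. ?a S + lam_mult r ?x ?b S) (\<lambda>S. ?a' S + lam_mult r ?x ?b' S)"
    by (rule twistR[OF xc xp_sq xp_com c1, symmetric])
  also have "\<dots> = lam_mult r (phi r e e' c f) (phi r e e' c h)"
    unfolding phi_def ..
  finally show ?thesis .
qed

lemma phi_one: "phi r e e' c lam_one = lam_one"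
proof -
  have "dA e lam_one = lam_one" by (rule ext) (auto simp: dA_def lam_one_def)
  moreover have "dB r e lam_one = (\<lambda>S. 0)" by (rule ext) (auto simp: dB_def lam_one_def)
  ultimately show ?thesis unfolding phi_def by (simp add: lam_mult_zero_r)
qed

lemma phi_hom: "phi r e e' c \<in> ring_hom (Lambda r E) (Lambda r (E - {e}))"
  by (rule ring_hom_memI) (simp_all add: phi_carrier mult_Lambda add_Lambda one_Lambda phi_mult phi_add phi_one)

lemma phi_id: "f \<in> carrier (Lambda r (E - {e})) \<Longrightarrow> phi r e e' c f = f"
proof -
  assume f: "f \<in> carrier (Lambda r (E - {e}))"
  have "(\<lambda>S. 0) \<in> carrier (Lambda r (E - {e}))" unfolding carrier_Lambda by simp
  from phi_recover[OF f this] show ?thesis by (simp add: lam_mult_zero_r)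
qed

lemma phi_gen: "x \<in> E \<Longrightarrow> phi r e e' c (lam_gen x) = (if x = e then smul c (lam_gen e') else lam_gen x)"
proof -
  assume x: "x \<in> E"
  show ?thesis
  proof (cases "x = e")
    case True
    have "dA e (lam_gen e) = (\<lambda>S. 0)" by (rule ext) (auto simp: dA_def lam_gen_def)
    moreover have "dB r e (lam_gen e) = lam_one" by (rule ext) (auto simp: dB_def lam_gen_def lam_one_def)
    moreover have "lam_mult r (smul c (lam_gen e')) lam_one = smul c (lam_gen e')"
      by (rule ext) (auto simp: lam_mult_one_r smul_def lam_gen_def)
    ultimately show ?thesis using True unfolding phi_def by simp
  next
    case False
    have "lam_gen x \<in> carrier (Lambda r (E - {e}))" using x False by (intro gen_carrier) auto
    then show ?thesis using False phi_id by simp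
  qed
qed

end

lemma smul_one[simp]: "smul 1 f = f" by (simp add: smul_def)
lemma smul_smul[simp]: "smul k (smul l f) = smul (k * l) f" by (rule ext) (simp add: smul_def)

lemma a_inv_Lambda:
  assumes "finite E" "f \<in> carrier (Lambda r E)"
  shows "\<ominus>\<^bsub>Lambda r E\<^esub> f = smul (-1) f"
proof -
  have car: "smul (-1) f \<in> carrier (Lambda r E)" by (rule smul_carrier[OF assms(2)])
  have eq: "smul (-1) f \<oplus>\<^bsub>Lambda r E\<^esub> f = \<zero>\<^bsub>Lambda r E\<^esub>"
    by (simp add: add_Lambda zero_Lambda smul_def)
  show ?thesis by (rule abelian_group.minus_equality[OF ring.is_abelian_group[OF ring_Lambda[OF assms(1)]] eq assms(2) car])
qed

lemma smul_pm_mem: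
  assumes "finite E" "ideal I (Lambda r E)" "f \<in> I" "d = 1 \<or> d = -1"
  shows "smul d f \<in> I"
proof (cases "d = 1")
  case False
  then have d: "d = -1" using assms(4) by simp
  have fc: "f \<in> carrier (Lambda r E)" by (rule ideal.Icarr[OF assms(2,3)])
  have "\<ominus>\<^bsub>Lambda r E\<^esub> f \<in> I"
    by (rule additive_subgroup.a_inv_closed[OF ideal.axioms(1)[OF assms(2)] assms(3)])
  then show ?thesis using a_inv_Lambda[OF assms(1) fc] d by simp
qed (use assms in simp)

lemma lam_mono_Cons: "lam_mono r (x # ws) = lam_mult r (lam_gen x) (lam_mono r ws)"
  by (simp add: lam_mono_def)
lemma lam_mono_Nil: "lam_mono r [] = lam_one"
  by (simp add: lam_mono_def)

lemma lam_mono_carrier: "set ws \<subseteq> E \<Longrightarrow> lam_mono r ws \<in> carrier (Lambda r E)"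
proof (induction ws)
  case Nil then show ?case by (simp add: lam_mono_Nil one_carrier)
next
  case (Cons x ws)
  then have "x \<in> E" "set ws \<subseteq> E" by auto
  then show ?case unfolding lam_mono_Cons by (intro lam_mult_closed gen_carrier Cons.IH)
qed

lemma lin_carrier:
  assumes "\<And>i. i \<in> I \<Longrightarrow> F i \<in> carrier (Lambda r E)"
  shows "(\<lambda>S. \<Sum>i\<in>I. k i * F i S) \<in> carrier (Lambda r E)"
  using assms unfolding carrier_Lambda by auto

lemma lam_mult_lin_r:
  "lam_mult r x (\<lambda>S. \<Sum>i\<in>I. k i * F i S) = (\<lambda>S. \<Sum>i\<in>I. k i * lam_mult r x (F i) S)"
proof (rule ext)
  fix S
  show "lam_mult r x (\<lambda>S. \<Sum>i\<in>I. k i * F i S) S = (\<Sum>i\<in>I. k i * lam_mult r x (F i) S)"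
  proof (cases "finite S")
    case True
    have "lam_mult r x (\<lambda>S. \<Sum>i\<in>I. k i * F i S) S = (\<Sum>T\<in>Pow S. \<Sum>i\<in>I. k i * (sg r T (S - T) * x T * F i (S - T)))"
      unfolding lam_mult_fin[OF True] by (simp add: sum_distrib_left mult_ac)
    also have "\<dots> = (\<Sum>i\<in>I. \<Sum>T\<in>Pow S. k i * (sg r T (S - T) * x T * F i (S - T)))"
      by (rule sum.swap)
    also have "\<dots> = (\<Sum>i\<in>I. k i * lam_mult r x (F i) S)"
      unfolding lam_mult_fin[OF True] by (simp add: sum_distrib_left)
    finally show ?thesis .
  qed (simp add: lam_mult_inf)
qed

lemma phi_lin:
  "phi r e e' c (\<lambda>S. \<Sum>i\<in>I. k i * F i S) = (\<lambda>S. \<Sum>i\<in>I. k i * phi r e e' c (F i) S)"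
proof -
  have 1: "dA e (\<lambda>S. \<Sum>i\<in>I. k i * F i S) = (\<lambda>S. \<Sum>i\<in>I. k i * dA e (F i) S)"
    by (rule ext) (simp add: dA_def)
  have 2: "dB r e (\<lambda>S. \<Sum>i\<in>I. k i * F i S) = (\<lambda>S. \<Sum>i\<in>I. k i * dB r e (F i) S)"
    by (rule ext) (simp add: dB_def sum_distrib_left mult_ac)
  show ?thesis unfolding phi_def 1 2 lam_mult_lin_r by (rule ext) (simp add: sum.distrib algebra_simps)
qed

definition sig :: "'e \<Rightarrow> 'e \<Rightarrow> 'e \<Rightarrow> 'e" where
  "sig e e' y = (if y = e then e' else y)"

definition cnt :: "'e \<Rightarrow> 'e list \<Rightarrow> nat" where
  "cnt e ws = length (filter ((=) e) ws)"

context
  fixes r :: nat and E :: "'e::linorder set" and e e' :: 'e and c :: int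
  assumes finE: "finite E" and eE: "e \<in> E" and e'E: "e' \<in> E" and ne: "e' \<noteq> e"
    and csq: "c * c = 1"
begin

lemma phi_mono: "set ws \<subseteq> E \<Longrightarrow> phi r e e' c (lam_mono r ws) = smul (c ^ cnt e ws) (lam_mono r (map (sig e e') ws))"
proof (induction ws)
  case Nil
  then show ?case using phi_one[OF finE eE e'E ne csq] by (simp add: lam_mono_Nil cnt_def)
next
  case (Cons x ws)
  have x: "x \<in> E" and ws: "set ws \<subseteq> E" using Cons.prems by auto
  have "phi r e e' c (lam_mono r (x # ws)) = lam_mult r (phi r e e' c (lam_gen x)) (phi r e e' c (lam_mono r ws))"
    unfolding lam_mono_Cons
    by (rule phi_mult[OF finE eE e'E ne csq gen_carrier[OF x] lam_mono_carrier[OF ws]])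
  also have "\<dots> = smul (c ^ cnt e (x # ws)) (lam_mono r (map (sig e e') (x # ws)))"
    unfolding phi_gen[OF finE eE e'E ne csq x] Cons.IH[OF ws]
    by (auto simp: smul_mult_l smul_mult_r lam_mono_Cons cnt_def sig_def mult_ac)
  finally show ?case .
qed

end

lemma lam_mono_single: "lam_mono r [y] = lam_gen y"
  by (rule ext) (simp add: lam_mono_Cons lam_mono_Nil lam_mult_one_r lam_gen_def)

lemma circuit_mono: "is_circuit E0 src tgt ws vs \<Longrightarrow> E0 \<subseteq> E \<Longrightarrow> is_circuit E src tgt ws vs"
  unfolding is_circuit_def by auto

lemma circuit_set: "is_circuit E src tgt ws vs \<Longrightarrow> set ws \<subseteq> E"
  unfolding is_circuit_def by (auto simp: in_set_conv_nth)

lemma del_set: "set (take i ws @ drop (Suc i) ws) \<subseteq> set ws"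
  by (auto dest: in_set_takeD in_set_dropD)

lemma arnold_carrier:
  assumes "is_circuit E src tgt ws vs"
  shows "arnold r src tgt ws vs \<in> carrier (Lambda r E)"
proof -
  have "set ws \<subseteq> E" using circuit_set[OF assms] .
  then have "\<And>i. lam_mono r (take i ws @ drop (Suc i) ws) \<in> carrier (Lambda r E)"
    using del_set by (metis lam_mono_carrier subset_trans)
  then show ?thesis unfolding arnold_def by (auto simp: one_carrier intro!: lin_carrier)
qed

definition cc :: "nat \<Rightarrow> ('e \<Rightarrow> 'v) \<Rightarrow> 'e \<Rightarrow> 'e \<Rightarrow> int" where
  "cc r src e e' = (if even r then 1 else if src e' = src e then 1 else -1)"

lemma cc_sq: "cc r src e e' * cc r src e e' = 1" by (simp add: cc_def)
lemma cc_pm: "cc r src e e' = 1 \<or> cc r src e e' = -1" by (simp add: cc_def)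

lemma cnt_del: "i < length ws \<Longrightarrow> cnt e ws = cnt e (take i ws @ drop (Suc i) ws) + (if ws ! i = e then 1 else 0)"
proof -
  assume i: "i < length ws"
  have "ws = take i ws @ ws ! i # drop (Suc i) ws" using i by (rule id_take_nth_drop)
  then have "cnt e ws = cnt e (take i ws @ ws ! i # drop (Suc i) ws)" by simp
  then show ?thesis by (simp add: cnt_def)
qed

lemma pow_pm: "(d::int) = 1 \<or> d = -1 \<Longrightarrow> d ^ n = 1 \<or> d ^ n = -1"
  by (cases "even n") auto

context
  fixes r :: nat and E :: "'e::linorder set" and e e' :: 'e and src tgt :: "'e \<Rightarrow> 'v"
  assumes finE: "finite E" and eE: "e \<in> E" and e'E: "e' \<in> E" and ne: "e' \<noteq> e"
    and noloop: "\<forall>x\<in>E. src x \<noteq> tgt x" and par: "{src e', tgt e'} = {src e, tgt e}"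
begin

abbreviation "c0 \<equiv> cc r src e e'"

lemma len_ne1: "is_circuit E src tgt ws vs \<Longrightarrow> length ws \<noteq> 1"
proof
  assume c: "is_circuit E src tgt ws vs" and l: "length ws = 1"
  then have "ws ! 0 \<in> E" "{src (ws ! 0), tgt (ws ! 0)} = {vs ! 0, vs ! 0}"
    unfolding is_circuit_def by auto
  then have "src (ws ! 0) = tgt (ws ! 0)" "ws ! 0 \<in> E" by auto
  then show False using noloop by blast
qed

lemma circ_map:
  assumes c: "is_circuit E src tgt ws vs"
  shows "is_circuit (E - {e}) src tgt (map (sig e e') ws) vs"
proof -
  have l: "length ws \<ge> 1" "length vs = length ws"
    and h: "\<And>i. i < length ws \<Longrightarrow> ws ! i \<in> E \<and> {src (ws ! i), tgt (ws ! i)} = {vs ! i, vs ! ((i + 1) mod length ws)}"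
    using c unfolding is_circuit_def by auto
  have "map (sig e e') ws ! i \<in> E - {e} \<and> {src (map (sig e e') ws ! i), tgt (map (sig e e') ws ! i)} = {vs ! i, vs ! ((i + 1) mod length ws)}"
    if i: "i < length ws" for i
  proof (cases "ws ! i = e")
    case True
    have m: "map (sig e e') ws ! i = e'" using i True by (simp add: sig_def)
    have "{src e, tgt e} = {vs ! i, vs ! ((i + 1) mod length ws)}" using h[OF i] unfolding True by blast
    then have "{src e', tgt e'} = {vs ! i, vs ! ((i + 1) mod length ws)}" using par by (rule trans[rotated])
    then show ?thesis unfolding m using ne e'E by blast
  next
    case False
    have m: "map (sig e e') ws ! i = ws ! i" using i False by (simp add: sig_def)
    show ?thesis unfolding m using h[OF i] False by blast
  qed
  then show ?thesis using l unfolding is_circuit_def by simp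
qed

lemma orient: "(src e' = src e \<and> tgt e' = tgt e) \<or> (src e' = tgt e \<and> tgt e' = src e)"
  using par[unfolded doubleton_eq_iff] .

lemma ne2: "src e \<noteq> tgt e" "src e' \<noteq> tgt e'" using noloop eE e'E by auto

lemma eps_map:
  assumes "is_circuit E src tgt ws vs" "i < length ws" "odd r"
  shows "circ_eps src tgt (map (sig e e') ws) vs i = (if ws ! i = e then c0 else 1) * circ_eps src tgt ws vs i"
proof (cases "ws ! i = e")
  case True
  have s: "{src e, tgt e} = {vs ! i, vs ! ((i + 1) mod length ws)}"
    using assms(1,2) unfolding is_circuit_def True[symmetric] by blast
  have m: "map (sig e e') ws ! i = e'" using assms(2) True by (simp add: sig_def)
  have s2: "(src e = vs ! i \<and> tgt e = vs ! ((i + 1) mod length ws)) \<or> (src e = vs ! ((i + 1) mod length ws) \<and> tgt e = vs ! i)"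
    using s[unfolded doubleton_eq_iff] .
  have tr: "(if ws ! i = e then c0 else 1) = c0" using True by simp
  let ?a = "vs ! i" and ?b = "vs ! ((i + 1) mod length ws)"
  have goal: "(if src e' = ?a \<and> tgt e' = ?b then 1 else - 1) = c0 * (if src e = ?a \<and> tgt e = ?b then 1 else - 1)"
    using orient proof
      assume o: "src e' = src e \<and> tgt e' = tgt e"
      then have "c0 = 1" using assms(3) by (simp add: cc_def)
      then show ?thesis using o by simp
    next
      assume o: "src e' = tgt e \<and> tgt e' = src e"
      then have c: "c0 = -1" using assms(3) ne2 by (simp add: cc_def)
      from s2 show ?thesis
      proof
        assume "src e = ?a \<and> tgt e = ?b" then show ?thesis using o c ne2 by auto
      next
        assume "src e = ?b \<and> tgt e = ?a" then show ?thesis using o c ne2 by auto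
      qed
    qed
  show ?thesis unfolding circ_eps_def m True length_map using goal by simp
next
  case False
  have m: "map (sig e e') ws ! i = ws ! i" using assms(2) False by (simp add: sig_def)
  show ?thesis unfolding circ_eps_def m using False by simp
qed

lemma arnold_map:
  assumes circ: "is_circuit E src tgt ws vs"
  shows "phi r e e' c0 (arnold r src tgt ws vs) = smul (c0 ^ cnt e ws) (arnold r src tgt (map (sig e e') ws) vs)"
proof -
  have l: "length ws \<noteq> 1" by (rule len_ne1[OF circ])
  have ws: "set ws \<subseteq> E" by (rule circuit_set[OF circ])
  let ?k = "\<lambda>i. (if even r then (-1) ^ (i + 1) else circ_eps src tgt ws vs i)"
  let ?k' = "\<lambda>i. (if even r then (-1) ^ (i + 1) else circ_eps src tgt (map (sig e e') ws) vs i)"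
  let ?D = "\<lambda>i. take i ws @ drop (Suc i) ws"
  have "phi r e e' c0 (arnold r src tgt ws vs) = (\<lambda>S. \<Sum>i<length ws. ?k i * phi r e e' c0 (lam_mono r (?D i)) S)"
    unfolding arnold_def using l by (simp add: phi_lin)
  also have "\<dots> = (\<lambda>S. \<Sum>i<length ws. ?k i * (c0 ^ cnt e (?D i) * lam_mono r (map (sig e e') (?D i)) S))"
  proof -
    have "\<And>i. phi r e e' c0 (lam_mono r (?D i)) = smul (c0 ^ cnt e (?D i)) (lam_mono r (map (sig e e') (?D i)))"
      using phi_mono[OF finE eE e'E ne cc_sq] ws del_set by (meson subset_trans)
    then show ?thesis by (simp add: smul_def)
  qed
  also have "\<dots> = smul (c0 ^ cnt e ws) (arnold r src tgt (map (sig e e') ws) vs)"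
  proof -
    have eq_i: "?k i * (c0 ^ cnt e (?D i) * lam_mono r (map (sig e e') (?D i)) S) =
      c0 ^ cnt e ws * (?k' i * lam_mono r (take i (map (sig e e') ws) @ drop (Suc i) (map (sig e e') ws)) S)"
      if i': "i < length ws" for i S
    proof -
      let ?L = "lam_mono r (take i (map (sig e e') ws) @ drop (Suc i) (map (sig e e') ws)) S"
      have lm: "lam_mono r (map (sig e e') (?D i)) S = ?L" by (simp add: take_map drop_map)
      have m: "cnt e ws = cnt e (?D i) + (if ws ! i = e then 1 else 0)" by (rule cnt_del[OF i'])
      have "?k i * (c0 ^ cnt e (?D i) * ?L) = c0 ^ cnt e ws * (?k' i * ?L)"
      proof (cases "even r")
        case True then show ?thesis by (simp add: cc_def)
      next
        case False
        have sq: "c0 * c0 = 1" by (rule cc_sq)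
        show ?thesis
        proof (cases "ws ! i = e")
          case True
          have k': "?k' i = c0 * ?k i" using eps_map[OF circ i' False] True False by simp
          have mm: "c0 ^ cnt e ws = c0 * c0 ^ cnt e (?D i)" using m True by simp
          have gen: "\<And>a P L::int. a * (P * L) = c0 * P * (c0 * a * L)"
          proof -
            fix a P L :: int
            have "c0 * P * (c0 * a * L) = (c0 * c0) * (a * (P * L))" by (simp add: ac_simps)
            then show "a * (P * L) = c0 * P * (c0 * a * L)" using sq by simp
          qed
          show ?thesis unfolding k' mm by (rule gen)
        next
          case F2: False
          have k': "?k' i = ?k i" using eps_map[OF circ i' False] F2 False by simp
          have mm: "cnt e ws = cnt e (?D i)" using m F2 by simp
          show ?thesis unfolding k' mm by (rule mult.left_commute)
        qed
      qed
      then show ?thesis by (simp only: lm)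
    qed
    have ar: "arnold r src tgt (map (sig e e') ws) vs = (\<lambda>S. \<Sum>i<length ws. ?k' i * lam_mono r (take i (map (sig e e') ws) @ drop (Suc i) (map (sig e e') ws)) S)"
      unfolding arnold_def using l by simp
    show ?thesis unfolding ar smul_def sum_distrib_left
      by (rule ext, rule sum.cong[OF refl]) (use eq_i in simp)
  qed
  finally show ?thesis .
qed

lemma two_circ: "is_circuit E src tgt [e, e'] [src e, tgt e]"
proof -
  have "[e, e'] ! i \<in> E \<and> {src ([e, e'] ! i), tgt ([e, e'] ! i)} = {[src e, tgt e] ! i, [src e, tgt e] ! ((i + 1) mod length [e, e'])}"
    if "i < length [e, e']" for i
  proof -
    have "i = 0 \<or> i = 1" using that by auto
    then show ?thesis
    proof
      assume "i = 0" then show ?thesis using eE by simp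
    next
      assume "i = 1" then show ?thesis using e'E par by (simp add: insert_commute)
    qed
  qed
  then show ?thesis unfolding is_circuit_def by simp
qed

lemma two_arnold: "\<exists>d. (d = 1 \<or> d = -1) \<and>
   (\<lambda>S. lam_gen e S - c0 * lam_gen e' S) = smul d (arnold r src tgt [e, e'] [src e, tgt e])"
proof -
  have k0: "circ_eps src tgt [e, e'] [src e, tgt e] 0 = 1" by (simp add: circ_eps_def)
  have k1: "circ_eps src tgt [e, e'] [src e, tgt e] 1 = (if src e' = tgt e \<and> tgt e' = src e then 1 else -1)"
    by (simp add: circ_eps_def)
  have A: "arnold r src tgt [e, e'] [src e, tgt e] = (\<lambda>S.
     (if even r then -1 else circ_eps src tgt [e, e'] [src e, tgt e] 0) * lam_gen e' S +
     (if even r then 1 else circ_eps src tgt [e, e'] [src e, tgt e] 1) * lam_gen e S)"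
    by (simp add: arnold_def lam_mono_single numeral_2_eq_2)
  show ?thesis
  proof (cases "even r")
    case True
    then have "(\<lambda>S. lam_gen e S - c0 * lam_gen e' S) = smul 1 (arnold r src tgt [e, e'] [src e, tgt e])"
      unfolding A by (simp add: cc_def smul_def)
    then show ?thesis by blast
  next
    case False
    show ?thesis
    proof (cases "src e' = src e")
      case True
      then have c: "c0 = 1" using False by (simp add: cc_def)
      have "\<not> (src e' = tgt e \<and> tgt e' = src e)" using True ne2 by simp
      then have k1': "circ_eps src tgt [e, e'] [src e, tgt e] 1 = -1" unfolding k1 by simp
      have "(\<lambda>S. lam_gen e S - c0 * lam_gen e' S) = smul (-1) (arnold r src tgt [e, e'] [src e, tgt e])"
        unfolding A k0 k1' c smul_def using False by simp
      then show ?thesis by blast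
    next
      case F2: False
      then have c: "c0 = -1" using False by (simp add: cc_def)
      have "src e' = tgt e \<and> tgt e' = src e" using F2 orient by blast
      then have "(\<lambda>S. lam_gen e S - c0 * lam_gen e' S) = smul 1 (arnold r src tgt [e, e'] [src e, tgt e])"
        unfolding A k0 k1 c smul_def using False by (simp add: add.commute)
      then show ?thesis by blast
    qed
  qed
qed

lemma diff_eq:
  assumes x: "x \<in> carrier (Lambda r E)"
  shows "(\<lambda>S. x S - phi r e e' c0 x S) = lam_mult r (\<lambda>S. lam_gen e S - c0 * lam_gen e' S) (dB r e x)"
proof (rule ext)
  fix S
  let ?g = "lam_gen e" and ?g' = "lam_gen e'" and ?b = "dB r e x"
  have r1: "(\<lambda>S. ?g S - c0 * ?g' S) = (\<lambda>S. ?g S + smul (- c0) ?g' S)" by (simp add: smul_def)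
  have r2: "lam_mult r (\<lambda>S. ?g S - c0 * ?g' S) ?b S = lam_mult r ?g ?b S + - c0 * lam_mult r ?g' ?b S"
    unfolding r1 lam_mult_distr smul_mult_l by (simp add: smul_def)
  have r3: "phi r e e' c0 x S = dA e x S + c0 * lam_mult r ?g' ?b S"
    unfolding phi_def smul_mult_l by (simp add: smul_def)
  have r4: "x S = dA e x S + lam_mult r ?g ?b S"
    using fun_cong[OF decomp[OF finE x, of e], of S] by simp
  show "x S - phi r e e' c0 x S = lam_mult r (\<lambda>S. ?g S - c0 * ?g' S) ?b S"
    unfolding r2 r3 using r4 by simp
qed

end

theorem mainTheorem4:
  fixes r :: nat and V :: "'v set" and E :: "'e::linorder set"
    and src tgt :: "'e \<Rightarrow> 'v" and e e' :: 'e
  assumes "r \<ge> 1"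
    and "finite V" and "finite E"
    and "\<forall>x\<in>E. src x \<in> V \<and> tgt x \<in> V"
    and "\<forall>x\<in>E. src x \<noteq> tgt x"
    and "e \<in> E" and "e' \<in> E" and "e' \<noteq> e"
    and "{src e', tgt e'} = {src e, tgt e}"
  shows "Rring r E src tgt \<simeq> Rring r (E - {e}) src tgt"
proof -
  note finE = assms(3) and noloop = assms(5) and eE = assms(6) and e'E = assms(7) and ne = assms(8)
    and par = assms(9)
  have finEm: "finite (E - {e})" using finE by simp
  let ?R = "Lambda r E"
  let ?Rm = "Lambda r (E - {e})"
  let ?c = "cc r src e e'"
  let ?phi = "phi r e e' ?c"
  let ?gens = "{arnold r src tgt ws vs | ws vs. is_circuit E src tgt ws vs}"
  let ?gensm = "{arnold r src tgt ws vs | ws vs. is_circuit (E - {e}) src tgt ws vs}"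
  let ?I = "arnold_ideal r E src tgt"
  let ?Im = "arnold_ideal r (E - {e}) src tgt"
  have R: "ring ?R" by (rule ring_Lambda[OF finE])
  have R0: "ring ?Rm" by (rule ring_Lambda[OF finEm])
  have sub0: "carrier ?Rm \<subseteq> carrier ?R" by (rule carrier_mono) auto
  have gsub: "?gens \<subseteq> carrier ?R" using arnold_carrier by blast
  have gsub0: "?gensm \<subseteq> carrier ?Rm" using arnold_carrier by blast
  have idI: "ideal ?I ?R" unfolding arnold_ideal_def by (rule ring.genideal_ideal[OF R gsub])
  have idI0: "ideal ?Im ?Rm" unfolding arnold_ideal_def by (rule ring.genideal_ideal[OF R0 gsub0])
  have gI: "?gens \<subseteq> ?I" unfolding arnold_ideal_def by (rule ring.genideal_self[OF R gsub])
  have gI0: "?gensm \<subseteq> ?Im" unfolding arnold_ideal_def by (rule ring.genideal_self[OF R0 gsub0])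
  have phihom: "?phi \<in> ring_hom ?R ?Rm" by (rule phi_hom[OF finE eE e'E ne cc_sq])
  have phirr: "ring_hom_ring ?R ?Rm ?phi" by (rule ring_hom_ringI2[OF R R0 phihom])
  have vim: "ideal {x \<in> carrier ?R. ?phi x \<in> ?Im} ?R" by (rule ring_hom_ring.ideal_vimage[OF phirr idI0])
  have gens_in: "?gens \<subseteq> {x \<in> carrier ?R. ?phi x \<in> ?Im}"
  proof
    fix y assume "y \<in> ?gens"
    then obtain ws vs where c: "is_circuit E src tgt ws vs" and y: "y = arnold r src tgt ws vs" by blast
    have py: "?phi y = smul (?c ^ cnt e ws) (arnold r src tgt (map (sig e e') ws) vs)"
      unfolding y by (rule arnold_map[OF finE eE e'E ne noloop par c])
    have "arnold r src tgt (map (sig e e') ws) vs \<in> ?gensm"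
      using circ_map[OF finE eE e'E ne noloop par c] by blast
    then have "arnold r src tgt (map (sig e e') ws) vs \<in> ?Im" using gI0 by blast
    then have "?phi y \<in> ?Im" unfolding py by (rule smul_pm_mem[OF finEm idI0 _ pow_pm[OF cc_pm]])
    moreover have "y \<in> carrier ?R" using c y arnold_carrier by blast
    ultimately show "y \<in> {x \<in> carrier ?R. ?phi x \<in> ?Im}" by blast
  qed
  have sub1: "?I \<subseteq> {x \<in> carrier ?R. ?phi x \<in> ?Im}"
    unfolding arnold_ideal_def[of r E] by (rule ring.genideal_minimal[OF R vim gens_in])
  have idhom: "id \<in> ring_hom ?Rm ?R"
    by (rule ring_hom_memI) (use sub0 in \<open>auto simp: mult_Lambda add_Lambda one_Lambda\<close>)
  have vim0: "ideal {x \<in> carrier ?Rm. id x \<in> ?I} ?Rm"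
    by (rule ring_hom_ring.ideal_vimage[OF ring_hom_ringI2[OF R0 R idhom] idI])
  have gens0_in: "?gensm \<subseteq> {x \<in> carrier ?Rm. id x \<in> ?I}"
  proof
    fix y assume "y \<in> ?gensm"
    then obtain ws vs where c: "is_circuit (E - {e}) src tgt ws vs" and y: "y = arnold r src tgt ws vs" by blast
    have "is_circuit E src tgt ws vs" using circuit_mono[OF c] by blast
    then have "y \<in> ?I" using y gI by blast
    moreover have "y \<in> carrier ?Rm" using c y arnold_carrier by blast
    ultimately show "y \<in> {x \<in> carrier ?Rm. id x \<in> ?I}" by simp
  qed
  have I0subI: "?Im \<subseteq> ?I"
    using ring.genideal_minimal[OF R0 vim0 gens0_in] unfolding arnold_ideal_def[of r "E - {e}"] by auto
  have sub2: "x \<in> ?I" if x: "x \<in> carrier ?R" and px: "?phi x \<in> ?Im" for x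
  proof -
    obtain d where d: "d = 1 \<or> d = -1"
      and deq: "(\<lambda>S. lam_gen e S - ?c * lam_gen e' S) = smul d (arnold r src tgt [e, e'] [src e, tgt e])"
      using two_arnold[OF finE eE e'E ne noloop par] by blast
    have A2: "arnold r src tgt [e, e'] [src e, tgt e] \<in> ?I"
      using two_circ[OF finE eE e'E ne noloop par] gI by blast
    have bc: "dB r e x \<in> carrier ?R" using dB_carrier[OF x] sub0 by blast
    have "lam_mult r (arnold r src tgt [e, e'] [src e, tgt e]) (dB r e x) \<in> ?I"
      using ideal.I_r_closed[OF idI A2 bc] by (simp add: mult_Lambda)
    then have d1: "(\<lambda>S. x S - ?phi x S) \<in> ?I"
      unfolding diff_eq[OF finE eE e'E ne noloop par x] deq smul_mult_l
      by (rule smul_pm_mem[OF finE idI _ d])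
    have d2: "?phi x \<in> ?I" using px I0subI by blast
    have "(\<lambda>S. x S - ?phi x S) \<oplus>\<^bsub>?R\<^esub> ?phi x \<in> ?I"
      by (rule additive_subgroup.a_closed[OF ideal.axioms(1)[OF idI] d1 d2])
    moreover have "(\<lambda>S. x S - ?phi x S) \<oplus>\<^bsub>?R\<^esub> ?phi x = x" by (simp add: add_Lambda)
    ultimately show ?thesis by simp
  qed
  let ?h = "a_r_coset ?Rm ?Im \<circ> ?phi"
  have hom: "?h \<in> ring_hom ?R (?Rm Quot ?Im)"
    by (rule ring_hom_trans[OF phihom ideal.rcos_ring_hom[OF idI0]])
  have hrr: "ring_hom_ring ?R (?Rm Quot ?Im) ?h"
    by (rule ring_hom_ringI2[OF R ideal.quotient_is_ring[OF idI0] hom])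
  have pc: "\<And>x. x \<in> carrier ?R \<Longrightarrow> ?phi x \<in> carrier ?Rm"
    by (rule phi_carrier[OF finE eE e'E ne cc_sq])
  have kiff: "?h x = ?Im \<longleftrightarrow> ?phi x \<in> ?Im" if x: "x \<in> carrier ?R" for x
  proof
    assume "?h x = ?Im"
    then show "?phi x \<in> ?Im" using ideal.rcos_const_imp_mem[OF idI0 pc[OF x]] by simp
  next
    assume "?phi x \<in> ?Im"
    then show "?h x = ?Im" using ring.a_rcos_zero[OF R0 idI0] by simp
  qed
  have kerEq: "a_kernel ?R (?Rm Quot ?Im) ?h = ?I"
  proof -
    have "a_kernel ?R (?Rm Quot ?Im) ?h = {x \<in> carrier ?R. ?h x = ?Im}"
      unfolding a_kernel_def' by (simp add: FactRing_def)
    also have "\<dots> = {x \<in> carrier ?R. ?phi x \<in> ?Im}" using kiff by blast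
    also have "\<dots> = ?I" using sub1 sub2 by blast
    finally show ?thesis .
  qed
  have surj: "?h ` carrier ?R = carrier (?Rm Quot ?Im)"
  proof
    show "?h ` carrier ?R \<subseteq> carrier (?Rm Quot ?Im)"
      using ring_hom_closed[OF hom] by blast
    show "carrier (?Rm Quot ?Im) \<subseteq> ?h ` carrier ?R"
    proof
      fix X assume "X \<in> carrier (?Rm Quot ?Im)"
      then obtain a where a: "a \<in> carrier ?Rm" and X: "X = a_r_coset ?Rm ?Im a"
        unfolding FactRing_def A_RCOSETS_def' by auto
      have "?phi a = a" by (rule phi_id[OF finE eE e'E ne cc_sq a])
      then have "?h a = X" using X by simp
      moreover have "a \<in> carrier ?R" using a sub0 by blast
      ultimately show "X \<in> ?h ` carrier ?R" by blast
    qed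
  qed
  have "?R Quot (a_kernel ?R (?Rm Quot ?Im) ?h) \<simeq> ?Rm Quot ?Im"
    by (rule ring_hom_ring.FactRing_iso[OF hrr surj])
  then show ?thesis unfolding Rring_def kerEq .
qed

end
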